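(* Let $(W,S)$ be a Coxeter system with $S=D$ finite and $W$ infinite. Let $\mathrm{Virg}(D)$ be the least common multiple (in $\mathbb{Q}[t]$, normalized to be monic) of the polynomials $W_X(t)$ over all $X\subsetneq D$ with $W_X$ finite. Then $\mathrm{Virg}(D)/W(t)$ is a polynomial; i.e. $W(t)$ can be written as a rational fraction whose numerator is $\mathrm{Virg}(D)$.
   Context: For $X\subseteq S$, $W_X$ is the special subgroup generated by $X$ and $W_X(t)=\sum_{g\in W_X}t^{l(g)}$ its Poincaré series ($l$ = word length with respect to $X$, which agrees with that with respect to $S$); for finite $W_X$ it is a polynomial of the form $[m_1+1]\cdots[m_k+1]$ with $[n]=1+t+\dots+t^{n-1}$, in particular monic with constant term $1$. *)

theory Defs
  imports "HOL-Computational_Algebra.Computational_Algebra" "HOL-Library.Extended_Nat" "HOL-Computational_Algebra.Field_as_Ring"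
begin

text \<open>Coxeter matrix on the generating set S; the value \<infinity> means "no relation".\<close>
definition is_coxeter_matrix :: "'a set \<Rightarrow> ('a \<Rightarrow> 'a \<Rightarrow> enat) \<Rightarrow> bool" where
  "is_coxeter_matrix S m \<longleftrightarrow>
     (\<forall>s\<in>S. m s s = 1) \<and> (\<forall>s\<in>S. \<forall>t\<in>S. m s t = m t s) \<and>
     (\<forall>s\<in>S. \<forall>t\<in>S. s \<noteq> t \<longrightarrow> 2 \<le> m s t)"

definition coxeter_relators :: "'a set \<Rightarrow> ('a \<Rightarrow> 'a \<Rightarrow> enat) \<Rightarrow> 'a list set" where
  "coxeter_relators S m =
     {concat (replicate k [s, t]) | s t k. s \<in> S \<and> t \<in> S \<and> m s t = enat k}"

inductive coxeter_eq :: "'a set \<Rightarrow> ('a \<Rightarrow> 'a \<Rightarrow> enat) \<Rightarrow> 'a list \<Rightarrow> 'a list \<Rightarrow> bool"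
  for S m where
  refl: "coxeter_eq S m w w"
| sym: "coxeter_eq S m v w \<Longrightarrow> coxeter_eq S m w v"
| trans: "coxeter_eq S m u v \<Longrightarrow> coxeter_eq S m v w \<Longrightarrow> coxeter_eq S m u w"
| rel: "r \<in> coxeter_relators S m \<Longrightarrow> coxeter_eq S m (u @ r @ v) (u @ v)"

text \<open>The element of W represented by a word.\<close>
definition cox_class :: "'a set \<Rightarrow> ('a \<Rightarrow> 'a \<Rightarrow> enat) \<Rightarrow> 'a list \<Rightarrow> 'a list set" where
  "cox_class S m w = {v \<in> lists S. coxeter_eq S m w v}"

text \<open>The special subgroup W_X (W itself is W_S).\<close>
definition special_subgroup :: "'a set \<Rightarrow> ('a \<Rightarrow> 'a \<Rightarrow> enat) \<Rightarrow> 'a set \<Rightarrow> 'a list set set" where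
  "special_subgroup S m X = cox_class S m ` lists X"

definition cox_length :: "'a set \<Rightarrow> ('a \<Rightarrow> 'a \<Rightarrow> enat) \<Rightarrow> 'a set \<Rightarrow> 'a list set \<Rightarrow> nat" where
  "cox_length S m X c = (LEAST n. \<exists>w\<in>lists X. cox_class S m w = c \<and> length w = n)"

definition poincare_fps :: "'a set \<Rightarrow> ('a \<Rightarrow> 'a \<Rightarrow> enat) \<Rightarrow> 'a set \<Rightarrow> rat fps" where
  "poincare_fps S m X =
     Abs_fps (\<lambda>n. of_nat (card {c \<in> special_subgroup S m X. cox_length S m X c = n}))"

text \<open>Poincare polynomial of W_X (meaningful when W_X is finite).\<close>
definition poincare_poly :: "'a set \<Rightarrow> ('a \<Rightarrow> 'a \<Rightarrow> enat) \<Rightarrow> 'a set \<Rightarrow> rat poly" where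
  "poincare_poly S m X = (\<Sum>c\<in>special_subgroup S m X. monom 1 (cox_length S m X c))"

definition virg :: "'a set \<Rightarrow> ('a \<Rightarrow> 'a \<Rightarrow> enat) \<Rightarrow> rat poly" where
  "virg S m = Lcm {poincare_poly S m X | X. X \<subset> S \<and> finite (special_subgroup S m X)}"

end

theory Submission
  imports Defs
begin

locale coxsys =
  fixes S :: "'a set" and m :: "'a \<Rightarrow> 'a \<Rightarrow> enat"
  assumes cm: "is_coxeter_matrix S m"
begin

abbreviation ceq (infix "\<simeq>" 50) where "v \<simeq> w \<equiv> coxeter_eq S m v w"

lemma ceq_refl[simp, intro]: "w \<simeq> w" by (rule coxeter_eq.refl)
lemma ceq_sym: "v \<simeq> w \<Longrightarrow> w \<simeq> v" by (rule coxeter_eq.sym)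
lemma ceq_trans[trans]: "u \<simeq> v \<Longrightarrow> v \<simeq> w \<Longrightarrow> u \<simeq> w" by (rule coxeter_eq.trans)

lemma ceq_cong: "v \<simeq> w \<Longrightarrow> a @ v @ b \<simeq> a @ w @ b"
proof (induction rule: coxeter_eq.induct)
  case (rel r u v)
  from coxeter_eq.rel[OF rel, of "a @ u" "v @ b"] show ?case by simp
qed (auto intro: ceq_sym ceq_trans)

lemma ceq_app: "a \<simeq> b \<Longrightarrow> c \<simeq> d \<Longrightarrow> a @ c \<simeq> b @ d"
proof -
  assume "a \<simeq> b" "c \<simeq> d"
  from ceq_cong[OF \<open>a \<simeq> b\<close>, of "[]" c] ceq_cong[OF \<open>c \<simeq> d\<close>, of b "[]"]
  show ?thesis by (auto intro: ceq_trans)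
qed

lemma ceq_app_l: "c \<simeq> d \<Longrightarrow> a @ c \<simeq> a @ d" by (rule ceq_app) auto
lemma ceq_app_r: "a \<simeq> b \<Longrightarrow> a @ c \<simeq> b @ c" by (rule ceq_app) auto

lemma rel_empty: "r \<in> coxeter_relators S m \<Longrightarrow> r \<simeq> []"
  using coxeter_eq.rel[of r S m "[]" "[]"] by simp

lemma ss_rel: "s \<in> S \<Longrightarrow> [s, s] \<in> coxeter_relators S m"
  using cm unfolding coxeter_relators_def is_coxeter_matrix_def
  by (auto intro!: exI[of _ s] exI[of _ 1] simp: one_enat_def)

lemma ss: "s \<in> S \<Longrightarrow> [s, s] \<simeq> []" by (rule rel_empty[OF ss_rel])

lemma ss_del: "s \<in> S \<Longrightarrow> a @ s # s # b \<simeq> a @ b"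
  using ceq_cong[OF ss, of s a b] by simp

lemma rev_concat_rep: "rev (concat (replicate k [s, t])) = concat (replicate k [t, s])"
proof (induction k)
  case (Suc k)
  have "concat (replicate k [t, s]) @ [t, s] = concat (replicate (Suc k) [t, s])"
    by (simp add: replicate_append_same[symmetric])
  then show ?case using Suc by simp
qed simp

lemma rel_rev: "r \<in> coxeter_relators S m \<Longrightarrow> rev r \<in> coxeter_relators S m"
  using cm unfolding coxeter_relators_def is_coxeter_matrix_def
  by (auto simp: rev_concat_rep) (metis)

lemma ceq_rev: "v \<simeq> w \<Longrightarrow> rev v \<simeq> rev w"
proof (induction rule: coxeter_eq.induct)
  case (rel r u v)
  from coxeter_eq.rel[OF rel_rev[OF rel], of "rev v" "rev u"] show ?case by simp
qed (auto intro: ceq_sym ceq_trans)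

lemma rev_cancel: "w \<in> lists S \<Longrightarrow> w @ rev w \<simeq> []"
proof (induction w)
  case (Cons s w)
  then have "[s] @ (w @ rev w) @ [s] \<simeq> [s] @ [] @ [s]" by (intro ceq_cong) auto
  also have "[s] @ [] @ [s] \<simeq> []" using ss Cons by simp
  finally show ?case by simp
qed simp

lemma rev_cancel': "w \<in> lists S \<Longrightarrow> rev w @ w \<simeq> []"
proof -
  assume "w \<in> lists S"
  then have "rev w \<in> lists S" by auto
  from rev_cancel[OF this] show ?thesis by simp
qed

lemma canc_l: "c \<in> lists S \<Longrightarrow> c @ x \<simeq> c @ y \<Longrightarrow> x \<simeq> y"
proof -
  assume c: "c \<in> lists S" and h: "c @ x \<simeq> c @ y"
  have "x \<simeq> (rev c @ c) @ x" using ceq_app_r[OF rev_cancel'[OF c], of x] by (simp add: ceq_sym)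
  also have "\<dots> = rev c @ (c @ x)" by simp
  also have "\<dots> \<simeq> rev c @ (c @ y)" using h by (rule ceq_app_l)
  also have "\<dots> = (rev c @ c) @ y" by simp
  also have "\<dots> \<simeq> y" using ceq_app_r[OF rev_cancel'[OF c], of y] by simp
  finally show ?thesis .
qed

lemma canc_r: "c \<in> lists S \<Longrightarrow> x @ c \<simeq> y @ c \<Longrightarrow> x \<simeq> y"
proof -
  assume c: "c \<in> lists S" and h: "x @ c \<simeq> y @ c"
  have "x \<simeq> x @ (c @ rev c)" using ceq_app_l[OF rev_cancel[OF c], of x] by (simp add: ceq_sym)
  also have "\<dots> = (x @ c) @ rev c" by simp
  also have "\<dots> \<simeq> (y @ c) @ rev c" using h by (rule ceq_app_r)
  also have "\<dots> = y @ (c @ rev c)" by simp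
  also have "\<dots> \<simeq> y" using ceq_app_l[OF rev_cancel[OF c], of y] by simp
  finally show ?thesis .
qed

lemma move_r: "c \<in> lists S \<Longrightarrow> x @ c \<simeq> y \<Longrightarrow> x \<simeq> y @ rev c"
proof -
  assume c: "c \<in> lists S" and h: "x @ c \<simeq> y"
  have "x \<simeq> x @ (c @ rev c)" using ceq_app_l[OF rev_cancel[OF c], of x] by (simp add: ceq_sym)
  also have "\<dots> = (x @ c) @ rev c" by simp
  also have "\<dots> \<simeq> y @ rev c" using h by (rule ceq_app_r)
  finally show ?thesis .
qed

lemma move_l: "c \<in> lists S \<Longrightarrow> c @ x \<simeq> y \<Longrightarrow> x \<simeq> rev c @ y"
proof -
  assume c: "c \<in> lists S" and h: "c @ x \<simeq> y"
  have "x \<simeq> (rev c @ c) @ x" using ceq_app_r[OF rev_cancel'[OF c], of x] by (simp add: ceq_sym)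
  also have "\<dots> = rev c @ (c @ x)" by simp
  also have "\<dots> \<simeq> rev c @ y" using h by (rule ceq_app_l)
  finally show ?thesis .
qed

end


definition rf :: "'a list \<Rightarrow> nat \<Rightarrow> 'a list" where
  "rf w i = take i w @ [w ! i] @ rev (take i w)"

fun altS :: "'a \<Rightarrow> 'a \<Rightarrow> nat \<Rightarrow> 'a list" where
  "altS a b 0 = []"
| "altS a b (Suc n) = a # altS b a n"

lemma length_altS[simp]: "length (altS a b n) = n"
  by (induction n arbitrary: a b) auto

lemma altS_snoc: "altS a b n @ [if even n then a else b] = altS a b (Suc n)"
  by (induction n arbitrary: a b) auto

lemma altS_add2: "altS a b (2 * k + n) = altS a b (2 * k) @ altS a b n"
proof (induction k)
  case (Suc k)
  have "altS a b (2 * Suc k + n) = a # b # altS a b (2 * k + n)"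
    by (simp add: numeral_2_eq_2)
  moreover have "altS a b (2 * Suc k) = a # b # altS a b (2 * k)"
    by (simp add: numeral_2_eq_2)
  ultimately show ?case using Suc by simp
qed simp

lemma rf_Cons_Suc: "j < length w \<Longrightarrow> rf (a # w) (Suc j) = a # rf w j @ [a]"
  by (simp add: rf_def)

lemma rf_altS: "j < n \<Longrightarrow> rf (altS a b n) j = altS a b (2 * j + 1)"
proof (induction n arbitrary: a b j)
  case (Suc n)
  show ?case
  proof (cases j)
    case 0 then show ?thesis by (simp add: rf_def)
  next
    case (Suc j')
    with Suc.prems have j': "j' < n" by simp
    have "rf (altS a b (Suc n)) j = a # rf (altS b a n) j' @ [a]"
      using Suc j' by (simp add: rf_Cons_Suc)
    also have "\<dots> = a # altS b a (2 * j' + 1) @ [a]" using Suc.IH[OF j'] by simp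
    also have "altS b a (2 * j' + 1) @ [a] = altS b a (Suc (2 * j' + 1))"
      using altS_snoc[of b a "2 * j' + 1"] by simp
    finally show ?thesis using Suc by simp
  qed
qed simp

lemma concat_rep_altS: "concat (replicate k [s, t]) = altS s t (2 * k)"
  by (induction k) (auto simp: numeral_2_eq_2)

lemma rf_app1: "i < length a \<Longrightarrow> rf (a @ b) i = rf a i"
  by (simp add: rf_def nth_append)

lemma rf_app2: "i < length b \<Longrightarrow> rf (a @ b) (length a + i) = a @ rf b i @ rev a"
  by (simp add: rf_def nth_append)

context coxsys begin

definition cnt2 :: "'a list \<Rightarrow> 'a list \<Rightarrow> 'a list \<Rightarrow> nat" where
  "cnt2 c w x = card {i. i < length w \<and> c @ rf w i @ rev c \<simeq> x}"

lemma cnt2_app: "cnt2 c (a @ b) x = cnt2 c a x + cnt2 (c @ a) b x"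
proof -
  let ?P = "\<lambda>i. c @ rf (a @ b) i @ rev c \<simeq> x"
  have eq: "{i. i < length (a @ b) \<and> ?P i} =
     {i. i < length a \<and> c @ rf a i @ rev c \<simeq> x} \<union>
     (\<lambda>i. length a + i) ` {i. i < length b \<and> (c @ a) @ rf b i @ rev (c @ a) \<simeq> x}"
  proof (rule set_eqI)
    fix i
    show "i \<in> {i. i < length (a @ b) \<and> ?P i} \<longleftrightarrow> i \<in> {i. i < length a \<and> c @ rf a i @ rev c \<simeq> x} \<union>
     (\<lambda>i. length a + i) ` {i. i < length b \<and> (c @ a) @ rf b i @ rev (c @ a) \<simeq> x}"
    proof (cases "i < length a")
      case True then show ?thesis by (auto simp: rf_app1)
    next
      case False
      then obtain j where j: "i = length a + j" by (metis add_diff_inverse)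
      show ?thesis using False j by (auto simp: rf_app2)
    qed
  qed
  have "card (\<dots>) = cnt2 c a x + cnt2 (c @ a) b x"
    unfolding cnt2_def
    by (subst card_Un_disjoint) (auto simp: card_image inj_on_def)
  with eq show ?thesis unfolding cnt2_def by simp
qed

lemma rel_del: "r \<simeq> [] \<Longrightarrow> a @ r @ b \<simeq> a @ b"
  using ceq_cong[of r "[]" a b] by simp

lemma rel_even: "r \<in> coxeter_relators S m \<Longrightarrow> even (cnt2 c r x)"
proof -
  assume r: "r \<in> coxeter_relators S m"
  then obtain s t k where rdef: "r = altS s t (2 * k)"
    unfolding coxeter_relators_def by (auto simp: concat_rep_altS)
  have r0: "r \<simeq> []" using rel_empty[OF r] .
  let ?P = "\<lambda>i. c @ rf r i @ rev c \<simeq> x"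
  have sh: "?P (i + k) = ?P i" if "i < k" for i
  proof -
    have "rf r (i + k) = altS s t (2 * (i + k) + 1)" using that rdef by (simp add: rf_altS)
    also have "\<dots> = altS s t (2 * k + (2 * i + 1))" by (simp add: algebra_simps)
    also have "\<dots> = r @ altS s t (2 * i + 1)" by (simp only: rdef altS_add2)
    also have "altS s t (2 * i + 1) = rf r i" using that rdef by (simp add: rf_altS)
    finally have e: "rf r (i + k) = r @ rf r i" .
    have "c @ r @ (rf r i @ rev c) \<simeq> c @ (rf r i @ rev c)" using rel_del[OF r0] .
    then show ?thesis using e by (auto intro: ceq_trans ceq_sym)
  qed
  have eq: "{i. i < length r \<and> ?P i} = {i. i < k \<and> ?P i} \<union> (\<lambda>i. i + k) ` {i. i < k \<and> ?P i}"
  proof (rule set_eqI)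
    fix i
    show "i \<in> {i. i < length r \<and> ?P i} \<longleftrightarrow> i \<in> {i. i < k \<and> ?P i} \<union> (\<lambda>i. i + k) ` {i. i < k \<and> ?P i}"
    proof (cases "i < k")
      case True then show ?thesis using rdef by auto
    next
      case False
      then obtain j where j: "i = j + k" by (metis add.commute le_add_diff_inverse not_less)
      show ?thesis using False j rdef sh by auto
    qed
  qed
  have "card {i. i < length r \<and> ?P i} = 2 * card {i. i < k \<and> ?P i}"
    unfolding eq by (subst card_Un_disjoint) (auto simp: card_image inj_on_def)
  then show ?thesis unfolding cnt2_def by simp
qed

lemma cnt2_parity: "v \<simeq> w \<Longrightarrow> even (cnt2 c v x) = even (cnt2 c w x)"
proof (induction arbitrary: c rule: coxeter_eq.induct)
  case (rel r u v)
  have r0: "r \<simeq> []" using rel_empty[OF rel] .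
  have r0': "rev r \<simeq> []" using rel_empty[OF rel_rev[OF rel]] .
  have "cnt2 (c @ u @ r) v x = cnt2 (c @ u) v x"
  proof -
    have "((c @ u @ r) @ rf v i @ rev (c @ u @ r) \<simeq> x) = ((c @ u) @ rf v i @ rev (c @ u) \<simeq> x)" for i
    proof -
      have "(c @ u @ r) @ rf v i @ rev (c @ u @ r) = (c @ u) @ r @ (rf v i @ rev r @ rev (c @ u))" by simp
      also have "\<dots> \<simeq> (c @ u) @ (rf v i @ rev r @ rev (c @ u))" by (rule rel_del[OF r0])
      also have "\<dots> = (c @ u @ rf v i) @ rev r @ rev (c @ u)" by simp
      also have "\<dots> \<simeq> (c @ u @ rf v i) @ rev (c @ u)" by (rule rel_del[OF r0'])
      finally have "(c @ u @ r) @ rf v i @ rev (c @ u @ r) \<simeq> (c @ u) @ rf v i @ rev (c @ u)" by simp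
      then show ?thesis by (auto intro: ceq_trans ceq_sym)
    qed
    then show ?thesis unfolding cnt2_def by simp
  qed
  moreover have "cnt2 c (u @ r @ v) x = cnt2 c u x + cnt2 (c @ u) r x + cnt2 (c @ u @ r) v x"
    by (simp add: cnt2_app)
  moreover have "cnt2 c (u @ v) x = cnt2 c u x + cnt2 (c @ u) v x"
    by (simp add: cnt2_app)
  ultimately show ?case using rel_even[OF rel, of "c @ u" x] by simp
qed auto

end


lemma split5: "i < j \<Longrightarrow> j < length w \<Longrightarrow>
  \<exists>p a q b z. w = p @ a # q @ b # z \<and> length p = i \<and> length q = j - Suc i"
proof -
  assume ij: "i < j" "j < length w"
  have e1: "w = take j w @ w ! j # drop (Suc j) w" by (rule id_take_nth_drop[OF ij(2)])
  have "i < length (take j w)" using ij by simp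
  from id_take_nth_drop[OF this]
  have e2: "take j w = take i w @ w ! i # take (j - Suc i) (drop (Suc i) w)"
    using ij by (simp add: drop_take min_def)
  have "w = take i w @ w ! i # take (j - Suc i) (drop (Suc i) w) @ w ! j # drop (Suc j) w"
    using e1 e2 by (metis append.assoc append_Cons)
  then show ?thesis using ij
    by (intro exI[of _ "take i w"] exI[of _ "w ! i"] exI[of _ "take (j - Suc i) (drop (Suc i) w)"]
        exI[of _ "w ! j"] exI[of _ "drop (Suc j) w"]) auto
qed

context coxsys begin

definition dr :: "'a list \<Rightarrow> bool" where
  "dr w \<longleftrightarrow> (\<forall>i j. i < j \<and> j < length w \<longrightarrow> \<not> rf w i \<simeq> rf w j)"

lemma deletion5:
  assumes w: "w = p @ a # q @ b # z" and wS: "w \<in> lists S"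
    and h: "rf w (length p) \<simeq> rf w (length p + Suc (length q))"
  shows "w \<simeq> p @ q @ z"
proof -
  have pS: "p \<in> lists S" and aS: "a \<in> S" and qS: "q \<in> lists S" using wS w by auto
  have rpS: "rev p \<in> lists S" and rqaS: "rev q @ [a] \<in> lists S" using pS qS aS by auto
  have e1: "rf w (length p) = p @ [a] @ rev p" using w by (simp add: rf_def)
  have e2: "rf w (length p + Suc (length q)) = (p @ [a]) @ (q @ [b] @ rev q @ [a]) @ rev p"
  proof -
    have "take (length p + Suc (length q)) w = p @ a # q" using w by simp
    moreover have "w ! (length p + Suc (length q)) = b" using w by (simp add: nth_append)
    ultimately show ?thesis by (simp add: rf_def)
  qed
  from h have "(p @ [a]) @ [] @ rev p \<simeq> (p @ [a]) @ (q @ [b] @ rev q @ [a]) @ rev p"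
    using e1 e2 by simp
  then have "[] @ rev p \<simeq> (q @ [b] @ rev q @ [a]) @ rev p" using canc_l[of "p @ [a]"] pS aS by auto
  then have "[] \<simeq> q @ [b] @ rev q @ [a]" using canc_r[of "rev p" "[]" "q @ [b] @ rev q @ [a]"] rpS by auto
  then have "(q @ [b]) @ (rev q @ [a]) \<simeq> []" by (simp add: ceq_sym)
  then have "q @ [b] \<simeq> [] @ rev (rev q @ [a])" using move_r[OF rqaS, of "q @ [b]" "[]"] by auto
  then have "[a] @ (q @ [b]) \<simeq> [a] @ ([a] @ q)" by (intro ceq_app_l) simp
  also have "[a] @ ([a] @ q) \<simeq> q" using ss_del[OF aS, of "[]" q] by simp
  finally have "a # q @ [b] \<simeq> q" by simp
  then have "p @ (a # q @ [b]) @ z \<simeq> p @ q @ z" by (rule ceq_cong)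
  then show ?thesis using w by simp
qed

lemma not_dr_shorter:
  assumes "w \<in> lists X" "X \<subseteq> S" "\<not> dr w"
  shows "\<exists>w'\<in>lists X. w \<simeq> w' \<and> length w' + 2 = length w"
proof -
  from assms(3) obtain i j where ij: "i < j" "j < length w" "rf w i \<simeq> rf w j"
    unfolding dr_def by auto
  from split5[OF ij(1,2)] obtain p a q b z where
    w: "w = p @ a # q @ b # z" "length p = i" "length q = j - Suc i" by blast
  have "length p + Suc (length q) = j" using w ij by simp
  then have "w \<simeq> p @ q @ z" using deletion5[OF w(1)] assms ij w by auto
  moreover have "p @ q @ z \<in> lists X" using assms(1) w by auto
  ultimately show ?thesis using w by (intro bexI[of _ "p @ q @ z"]) auto
qed

lemma ex_dr: "w \<in> lists X \<Longrightarrow> X \<subseteq> S \<Longrightarrow> \<exists>v\<in>lists X. w \<simeq> v \<and> dr v \<and> length v \<le> length w"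
proof (induction "length w" arbitrary: w rule: less_induct)
  case less
  show ?case
  proof (cases "dr w")
    case True then show ?thesis using less by auto
  next
    case False
    from not_dr_shorter[OF less.prems False] obtain w' where
      w': "w' \<in> lists X" "w \<simeq> w'" "length w' + 2 = length w" by blast
    from less.hyps[of w'] w' less.prems obtain v where
      "v \<in> lists X" "w' \<simeq> v" "dr v" "length v \<le> length w'" by auto
    then show ?thesis using w' by (auto intro: ceq_trans)
  qed
qed

lemma dr_min:
  assumes "dr w" "w \<simeq> v"
  shows "length w \<le> length v"
proof -
  have odd: "odd (cnt2 [] v (rf w i))" if i: "i < length w" for i
  proof -
    have "{j. j < length w \<and> [] @ rf w j @ rev [] \<simeq> rf w i} = {i}"
    proof (rule set_eqI, rule iffI)
      fix j assume "j \<in> {j. j < length w \<and> [] @ rf w j @ rev [] \<simeq> rf w i}"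
      then have j: "j < length w" "rf w j \<simeq> rf w i" by auto
      show "j \<in> {i}"
      proof (rule ccontr)
        assume "j \<notin> {i}"
        then have "j < i \<or> i < j" by auto
        then show False using assms(1) i j unfolding dr_def by (auto intro: ceq_sym)
      qed
    qed (use i in auto)
    then have "cnt2 [] w (rf w i) = 1" unfolding cnt2_def by simp
    then show ?thesis using cnt2_parity[OF assms(2), of "[]" "rf w i"] by simp
  qed
  have ex: "\<exists>j. j < length v \<and> rf v j \<simeq> rf w i" if i: "i < length w" for i
  proof -
    from odd[OF i] have "cnt2 [] v (rf w i) \<noteq> 0" by (metis even_zero)
    then have "{j. j < length v \<and> [] @ rf v j @ rev [] \<simeq> rf w i} \<noteq> {}"
      unfolding cnt2_def by (metis card.empty)
    then show ?thesis by auto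
  qed
  define f where "f i = (SOME j. j < length v \<and> rf v j \<simeq> rf w i)" for i
  have f: "f i < length v \<and> rf v (f i) \<simeq> rf w i" if "i < length w" for i
    unfolding f_def using someI_ex[OF ex[OF that]] .
  have "inj_on f {..<length w}"
  proof (rule inj_onI)
    fix i i' assume ii: "i \<in> {..<length w}" "i' \<in> {..<length w}" "f i = f i'"
    then have "rf w i \<simeq> rf w i'" using f[of i] f[of i'] by (auto intro: ceq_trans ceq_sym)
    then show "i = i'" using assms(1) ii unfolding dr_def
      by (metis lessThan_iff linorder_neqE_nat ceq_sym)
  qed
  moreover have "f ` {..<length w} \<subseteq> {..<length v}" using f by auto
  ultimately have "card {..<length w} \<le> card {..<length v}"
    by (metis card_inj_on_le finite_lessThan)
  then show ?thesis by simp
qed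

definition len :: "'a list \<Rightarrow> nat" where
  "len w = (LEAST n. \<exists>v\<in>lists S. v \<simeq> w \<and> length v = n)"

lemma len_dr: "v \<in> lists S \<Longrightarrow> dr v \<Longrightarrow> v \<simeq> w \<Longrightarrow> len w = length v"
  unfolding len_def
proof (rule Least_equality)
  assume "v \<in> lists S" "dr v" "v \<simeq> w"
  then show "\<exists>u\<in>lists S. u \<simeq> w \<and> length u = length v" by auto
  fix n assume "\<exists>u\<in>lists S. u \<simeq> w \<and> length u = n"
  then obtain u where "u \<simeq> w" "length u = n" by auto
  then show "length v \<le> n" using dr_min[OF \<open>dr v\<close>, of u] \<open>v \<simeq> w\<close>
    by (auto intro: ceq_trans ceq_sym)
qed

lemma ex_red: "w \<in> lists X \<Longrightarrow> X \<subseteq> S \<Longrightarrow> \<exists>v\<in>lists X. v \<simeq> w \<and> dr v \<and> length v = len w"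
proof -
  assume a: "w \<in> lists X" "X \<subseteq> S"
  from ex_dr[OF a] obtain v where v: "v \<in> lists X" "w \<simeq> v" "dr v" by auto
  have "v \<in> lists S" using v a by auto
  moreover have "len w = length v" using len_dr[of v w] v \<open>v \<in> lists S\<close> by (auto intro: ceq_sym)
  ultimately show ?thesis using v by (intro bexI[of _ v]) (auto intro: ceq_sym)
qed

lemma len_cong: "v \<simeq> w \<Longrightarrow> len v = len w"
  unfolding len_def by (metis ceq_trans ceq_sym)

lemma len_le: "w \<in> lists S \<Longrightarrow> len w \<le> length w"
  using ex_red[of w S] ex_dr[of w S] by (metis order.refl ceq_sym len_dr)

lemma len_Nil[simp]: "len [] = 0"
  using len_le[of "[]"] by simp

lemma len_eq_dr: "w \<in> lists S \<Longrightarrow> len w = length w \<Longrightarrow> dr w"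
proof (rule ccontr)
  assume a: "w \<in> lists S" "len w = length w" "\<not> dr w"
  from not_dr_shorter[OF a(1) order.refl a(3)] obtain w' where
    "w' \<in> lists S" "w \<simeq> w'" "length w' + 2 = length w" by blast
  then have "len w \<le> length w'" using len_le[of w'] len_cong[of w w'] by simp
  then show False using a \<open>length w' + 2 = length w\<close> by simp
qed

lemma len_dr_iff: "w \<in> lists S \<Longrightarrow> dr w \<longleftrightarrow> len w = length w"
  using len_eq_dr len_dr[of w w] by auto

lemma len_app: "a \<in> lists S \<Longrightarrow> b \<in> lists S \<Longrightarrow> len (a @ b) \<le> len a + len b"
proof -
  assume ab: "a \<in> lists S" "b \<in> lists S"
  from ex_red[OF ab(1) order.refl] obtain a' where a': "a' \<in> lists S" "a' \<simeq> a" "length a' = len a" by auto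
  from ex_red[OF ab(2) order.refl] obtain b' where b': "b' \<in> lists S" "b' \<simeq> b" "length b' = len b" by auto
  have "a' @ b' \<simeq> a @ b" using a' b' by (intro ceq_app)
  then have "len (a @ b) = len (a' @ b')" by (simp add: len_cong ceq_sym)
  also have "\<dots> \<le> length (a' @ b')" using a' b' by (intro len_le) auto
  finally show ?thesis using a' b' by simp
qed

lemma len_rev_le: "w \<in> lists S \<Longrightarrow> len (rev w) \<le> len w"
proof -
  assume w: "w \<in> lists S"
  from ex_red[OF w order.refl] obtain a where a: "a \<in> lists S" "a \<simeq> w" "length a = len w" by auto
  have "rev a \<simeq> rev w" using ceq_rev[OF a(2)] .
  then have "len (rev w) = len (rev a)" by (simp add: len_cong ceq_sym)
  also have "\<dots> \<le> length (rev a)" using a by (intro len_le) auto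
  finally show ?thesis using a by simp
qed

lemma len_rev: "w \<in> lists S \<Longrightarrow> len (rev w) = len w"
proof -
  assume w: "w \<in> lists S"
  then have "rev w \<in> lists S" by auto
  from len_rev_le[OF w] len_rev_le[OF this] show ?thesis by simp
qed

lemma len0: "w \<in> lists S \<Longrightarrow> len w = 0 \<Longrightarrow> w \<simeq> []"
  using ex_red[of w S] by (auto intro: ceq_sym)

end


context coxsys begin

lemma dr_prefix: "dr (a @ b) \<Longrightarrow> dr a"
  unfolding dr_def
proof (intro allI impI)
  fix i j assume h: "\<forall>i j. i < j \<and> j < length (a @ b) \<longrightarrow> \<not> rf (a @ b) i \<simeq> rf (a @ b) j"
    and ij: "i < j \<and> j < length a"
  then have "\<not> rf (a @ b) i \<simeq> rf (a @ b) j" by auto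
  then show "\<not> rf a i \<simeq> rf a j" using ij by (simp add: rf_app1)
qed

lemma len_snoc_pm:
  assumes w: "w \<in> lists S" and s: "s \<in> S"
  shows "len (w @ [s]) = Suc (len w) \<or> Suc (len (w @ [s])) = len w"
proof -
  from ex_red[OF w order.refl] obtain a where a: "a \<in> lists S" "a \<simeq> w" "dr a" "length a = len w" by auto
  have eq: "len (w @ [s]) = len (a @ [s])" using len_cong[OF ceq_app_r[OF a(2)]] by simp
  have as: "a @ [s] \<in> lists S" using a s by auto
  have ws: "w @ [s] \<in> lists S" using w s by auto
  have up: "len w \<le> Suc (len (w @ [s]))"
  proof -
    have "w \<simeq> (w @ [s]) @ [s]" using ss_del[OF s, of w "[]"] by (simp add: ceq_sym)
    then have "len w = len ((w @ [s]) @ [s])" by (rule len_cong)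
    also have "\<dots> \<le> len (w @ [s]) + len [s]" using ws s by (intro len_app) auto
    also have "len [s] \<le> 1" using len_le[of "[s]"] s by simp
    finally show ?thesis by simp
  qed
  show ?thesis
  proof (cases "dr (a @ [s])")
    case True
    then have "len (a @ [s]) = length (a @ [s])" using len_dr[OF as True] by simp
    then show ?thesis using eq a by simp
  next
    case False
    from not_dr_shorter[OF as order.refl False] obtain w' where
      w': "w' \<in> lists S" "a @ [s] \<simeq> w'" "length w' + 2 = length (a @ [s])" by blast
    have "len (a @ [s]) = len w'" using w' by (intro len_cong)
    also have "\<dots> \<le> length w'" using w' len_le by auto
    finally have "len (a @ [s]) + 1 \<le> len w" using w' a by simp
    then show ?thesis using eq up by simp
  qed
qed

lemma exchange:
  assumes a: "a \<in> lists S" "dr a" and s: "s \<in> S" and nd: "\<not> dr (a @ [s])"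
  shows "\<exists>i<length a. a @ [s] \<simeq> take i a @ drop (Suc i) a"
proof -
  from nd obtain i j where ij: "i < j" "j < length (a @ [s])" "rf (a @ [s]) i \<simeq> rf (a @ [s]) j"
    unfolding dr_def by auto
  have j: "j = length a"
  proof (rule ccontr)
    assume "j \<noteq> length a"
    then have "j < length a" using ij by simp
    then show False using ij a(2) unfolding dr_def by (auto simp: rf_app1)
  qed
  from split5[OF ij(1,2)] obtain p x q b z where
    w: "a @ [s] = p @ x # q @ b # z" "length p = i" "length q = j - Suc i" by blast
  have "length (a @ [s]) = length (p @ x # q @ b # z)" using w(1) by (rule arg_cong)
  then have "length z = 0" using w(2,3) j ij by (cases z) auto
  then have z: "z = []" by simp
  then have aeq: "a = p @ x # q" and "b = s" using w(1) by auto
  have "a @ [s] \<in> lists S" using a s by auto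
  moreover have "length p + Suc (length q) = j" using w j ij by simp
  ultimately have "a @ [s] \<simeq> p @ q @ z"
  proof -
    assume as: "a @ [s] \<in> lists S" and jj: "length p + Suc (length q) = j"
    have "rf (a @ [s]) (length p) \<simeq> rf (a @ [s]) (length p + Suc (length q))"
      using ij(3) w(2) jj by simp
    then show ?thesis using deletion5[OF w(1) as] w(1) by simp
  qed
  moreover have "take i a = p" "drop (Suc i) a = q" using aeq w by auto
  ultimately show ?thesis using z ij j by (intro exI[of _ i]) auto
qed

definition minY :: "'a set \<Rightarrow> 'a list \<Rightarrow> bool" where
  "minY Y u \<longleftrightarrow> u \<in> lists S \<and> (\<forall>v\<in>lists Y. len u \<le> len (u @ v))"

lemma minY_cong: "minY Y u \<Longrightarrow> u \<simeq> u' \<Longrightarrow> u' \<in> lists S \<Longrightarrow> minY Y u'"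
  unfolding minY_def using len_cong[of u u'] len_cong[OF ceq_app_r[of u u']] by auto

lemma P1_dr:
  assumes Y: "Y \<subseteq> S" and u: "minY Y u"
  shows "v \<in> lists Y \<Longrightarrow> dr v \<Longrightarrow> len (u @ v) = len u + length v"
proof (induction v rule: rev_induct)
  case Nil then show ?case by simp
next
  case (snoc s v)
  have uS: "u \<in> lists S" using u unfolding minY_def by auto
  have vY: "v \<in> lists Y" and sY: "s \<in> Y" using snoc.prems by auto
  then have vS: "v \<in> lists S" and sS: "s \<in> S" using Y by auto
  have drv: "dr v" using dr_prefix snoc.prems by blast
  have IH: "len (u @ v) = len u + length v" using snoc.IH vY drv by simp
  from ex_red[OF uS order.refl] obtain a where a: "a \<in> lists S" "a \<simeq> u" "dr a" "length a = len u" by auto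
  have av: "a @ v \<simeq> u @ v" using a by (intro ceq_app_r)
  have avS: "a @ v \<in> lists S" using a vS by auto
  have "len (a @ v) = length (a @ v)" using IH a len_cong[OF av] by simp
  then have dav: "dr (a @ v)" using len_eq_dr[OF avS] by simp
  have e: "len (u @ v @ [s]) = len ((a @ v) @ [s])"
    using av by (metis append.assoc ceq_app_r len_cong ceq_sym)
  have dvs: "len (v @ [s]) = length (v @ [s])"
    using len_dr[of "v @ [s]" "v @ [s]"] snoc.prems vS sS by auto
  from len_snoc_pm[OF avS sS] show ?case
  proof
    assume "len ((a @ v) @ [s]) = Suc (len (a @ v))"
    then show ?thesis using e IH len_cong[OF av] by simp
  next
    assume dn: "Suc (len ((a @ v) @ [s])) = len (a @ v)"
    have "\<not> dr ((a @ v) @ [s])"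
    proof
      assume "dr ((a @ v) @ [s])"
      then have "len ((a @ v) @ [s]) = length ((a @ v) @ [s])"
        using len_dr[of "(a @ v) @ [s]"] avS sS by auto
      then show False using dn \<open>len (a @ v) = length (a @ v)\<close> by simp
    qed
    from exchange[OF avS dav sS this] obtain i where
      i: "i < length (a @ v)" "(a @ v) @ [s] \<simeq> take i (a @ v) @ drop (Suc i) (a @ v)" by blast
    show ?thesis
    proof (cases "i < length a")
      case False
      define k where "k = i - length a"
      have ik: "i = length a + k" using False k_def by simp
      have "a @ (v @ [s]) \<simeq> a @ (take k v @ drop (Suc k) v)" using i(2) ik by simp
      then have vv: "v @ [s] \<simeq> take k v @ drop (Suc k) v" by (rule canc_l[OF a(1)])
      have "len (v @ [s]) = len (take k v @ drop (Suc k) v)" using vv by (rule len_cong)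
      also have "\<dots> \<le> length (take k v @ drop (Suc k) v)"
        using vS by (intro len_le) (auto dest: in_set_takeD in_set_dropD)
      finally show ?thesis using dvs i ik by simp
    next
      case True
      define a' where "a' = take i a @ drop (Suc i) a"
      have a'S: "a' \<in> lists S" using a(1) by (auto simp: a'_def dest: in_set_takeD in_set_dropD)
      have "a @ (v @ [s]) \<simeq> a' @ v" using i(2) True by (simp add: a'_def)
      then have "a \<simeq> (a' @ v) @ rev (v @ [s])" using snoc.prems Y by (intro move_r) auto
      then have ua: "u \<simeq> a' @ (v @ [s] @ rev v)" using a(2) by (auto intro: ceq_trans ceq_sym)
      define y where "y = v @ [s] @ rev v"
      have yY: "y \<in> lists Y" using vY sY by (auto simp: y_def)
      have yS: "y \<in> lists S" using yY Y by auto
      have "u @ y \<simeq> (a' @ y) @ y" using ua by (intro ceq_app_r) (simp add: y_def)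
      also have "(a' @ y) @ y = a' @ (y @ rev y) @ []" by (simp add: y_def)
      also have "\<dots> \<simeq> a' @ [] @ []" using rev_cancel[OF yS] by (rule ceq_cong)
      finally have "len (u @ y) = len a'" using len_cong by simp
      also have "\<dots> \<le> length a'" using len_le[OF a'S] .
      also have "\<dots> < len u" using True a by (simp add: a'_def)
      finally have "len (u @ y) < len u" .
      moreover have "len u \<le> len (u @ y)" using u yY unfolding minY_def by blast
      ultimately show ?thesis by simp
    qed
  qed
qed

lemma P1:
  assumes Y: "Y \<subseteq> S" and u: "minY Y u" and v: "v \<in> lists Y"
  shows "len (u @ v) = len u + len v"
proof -
  from ex_red[OF v Y] obtain v0 where v0: "v0 \<in> lists Y" "v0 \<simeq> v" "dr v0" "length v0 = len v" by auto
  have "len (u @ v) = len (u @ v0)" using len_cong[OF ceq_app_l[OF v0(2)]] by simp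
  also have "\<dots> = len u + length v0" using P1_dr[OF Y u v0(1,3)] .
  finally show ?thesis using v0 by simp
qed

lemma P2:
  assumes YZ: "Y \<subseteq> Z" and ZS: "Z \<subseteq> S" and c: "c \<in> lists Z"
  shows "\<exists>u\<in>lists Z. \<exists>v\<in>lists Y. minY Y u \<and> c \<simeq> u @ v"
proof -
  define n0 where "n0 = (LEAST n. \<exists>v\<in>lists Y. len (c @ v) = n)"
  have "\<exists>v\<in>lists Y. len (c @ v) = n0" unfolding n0_def
    by (rule LeastI_ex) (auto intro: bexI[of _ "[]"])
  then obtain v0 where v0: "v0 \<in> lists Y" "len (c @ v0) = n0" by auto
  have uZ: "c @ v0 \<in> lists Z" using c v0 YZ by auto
  have "minY Y (c @ v0)" unfolding minY_def
  proof (intro conjI ballI)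
    show "c @ v0 \<in> lists S" using uZ ZS by auto
    fix v assume "v \<in> lists Y"
    then have vv: "v0 @ v \<in> lists Y" using v0 by auto
    have "n0 \<le> len (c @ (v0 @ v))" unfolding n0_def by (rule Least_le, rule bexI[OF _ vv]) simp
    then show "len (c @ v0) \<le> len ((c @ v0) @ v)" using v0 by simp
  qed
  moreover have "c \<simeq> (c @ v0) @ rev v0"
    using ceq_app_l[OF rev_cancel[of v0], of c] v0 YZ ZS by (auto intro: ceq_sym)
  moreover have "rev v0 \<in> lists Y" using v0 by auto
  ultimately show ?thesis using uZ by blast
qed

lemma P3:
  assumes Y: "Y \<subseteq> S" and u: "minY Y u" and u': "minY Y u'"
    and v: "v \<in> lists Y" and v': "v' \<in> lists Y" and h: "u @ v \<simeq> u' @ v'"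
  shows "u \<simeq> u' \<and> v \<simeq> v'"
proof -
  have vS: "v \<in> lists S" and v'S: "v' \<in> lists S" using v v' Y by auto
  have e1: "u' \<simeq> u @ (v @ rev v')"
    using move_r[OF v'S, of u' "u @ v"] h by (simp add: ceq_sym)
  have e2: "u \<simeq> u' @ (v' @ rev v)"
    using move_r[OF vS, of u "u' @ v'"] h by simp
  have vv1: "v @ rev v' \<in> lists Y" and vv2: "v' @ rev v \<in> lists Y" using v v' by auto
  have l1: "len u' = len u + len (v @ rev v')"
    using len_cong[OF e1] P1[OF Y u vv1] by simp
  have l2: "len u = len u' + len (v' @ rev v)"
    using len_cong[OF e2] P1[OF Y u' vv2] by simp
  have "len (v @ rev v') = 0" using l1 l2 by simp
  then have "v @ rev v' \<simeq> []" using vS v'S by (intro len0) auto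
  then have vv: "v \<simeq> [] @ rev (rev v')" using v'S by (intro move_r) auto
  have "u' \<simeq> u @ []" using e1 ceq_app_l[OF \<open>v @ rev v' \<simeq> []\<close>, of u] by (auto intro: ceq_trans)
  then show ?thesis using vv by (auto intro: ceq_sym)
qed

lemma P4:
  assumes Y: "Y \<subseteq> S" and u: "u \<in> lists S" and asc: "\<forall>s\<in>Y. len u < len (u @ [s])"
  shows "minY Y u"
proof -
  from P2[OF Y order.refl u] obtain u0 v0 where
    uv: "u0 \<in> lists S" "v0 \<in> lists Y" "minY Y u0" "u \<simeq> u0 @ v0" by blast
  have lu: "len u = len u0 + len v0" using len_cong[OF uv(4)] P1[OF Y uv(3,2)] by simp
  show ?thesis
  proof (cases "len v0 = 0")
    case True
    then have "v0 \<simeq> []" using uv Y by (intro len0) auto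
    then have "u0 @ v0 \<simeq> u0 @ []" by (rule ceq_app_l)
    then have "u0 \<simeq> u" using uv by (auto intro: ceq_trans ceq_sym)
    then show ?thesis using minY_cong[OF uv(3)] u by auto
  next
    case False
    from ex_red[OF uv(2) Y] obtain b where b: "b \<in> lists Y" "b \<simeq> v0" "length b = len v0" by auto
    then have "b \<noteq> []" using False by auto
    then obtain b' s where bs: "b = b' @ [s]" by (metis rev_exhaust)
    have sY: "s \<in> Y" and b'Y: "b' \<in> lists Y" using b bs by auto
    have sS: "s \<in> S" using sY Y by auto
    have "u @ [s] \<simeq> (u0 @ v0) @ [s]" using uv by (intro ceq_app_r)
    also have "\<dots> \<simeq> (u0 @ b) @ [s]" using b(2) by (intro ceq_app_r ceq_app_l) (rule ceq_sym)
    also have "\<dots> = (u0 @ b') @ [s, s] @ []" using bs by simp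
    also have "\<dots> \<simeq> (u0 @ b') @ [] @ []" using ss[OF sS] by (rule ceq_cong)
    finally have "len (u @ [s]) = len (u0 @ b')" using len_cong by simp
    also have "\<dots> = len u0 + len b'" using P1[OF Y uv(3) b'Y] .
    also have "len b' \<le> length b'" using b'Y Y by (intro len_le) auto
    finally show ?thesis using asc sY lu b bs by auto
  qed
qed

lemma minY_asc: "Y \<subseteq> S \<Longrightarrow> minY Y u \<Longrightarrow> s \<in> Y \<Longrightarrow> len u < len (u @ [s])"
proof -
  assume a: "Y \<subseteq> S" "minY Y u" "s \<in> Y"
  then have "len u \<le> len (u @ [s])" unfolding minY_def by auto
  moreover have "u \<in> lists S" "s \<in> S" using a unfolding minY_def by auto
  ultimately show ?thesis using len_snoc_pm[of u s] by auto
qed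

end


lemma take_altS: "take j (altS a b n) = altS a b (min j n)"
proof (induction n arbitrary: a b j)
  case (Suc n) then show ?case by (cases j) auto
qed simp

lemma set_altS: "set (altS a b n) \<subseteq> {a, b}"
  by (induction n arbitrary: a b) auto

lemma altS_add: "altS a b (j + n) = altS a b j @ altS (if even j then a else b) (if even j then b else a) n"
  by (induction j arbitrary: a b) auto

lemma alt_char: "x \<noteq> y \<Longrightarrow> set w \<subseteq> {x, y} \<Longrightarrow> (\<forall>i. Suc i < length w \<longrightarrow> w ! i \<noteq> w ! Suc i) \<Longrightarrow>
   w \<noteq> [] \<Longrightarrow> hd w = x \<Longrightarrow> w = altS x y (length w)"
proof (induction w arbitrary: x y)
  case (Cons a w)
  show ?case
  proof (cases w)
    case Nil then show ?thesis using Cons by simp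
  next
    case (Cons b w')
    have "b \<noteq> a" using Cons.prems(3) Cons by (metis length_Cons nth_Cons_0 nth_Cons_Suc zero_less_Suc Suc_less_eq)
    then have b: "b = y" using Cons.prems Cons by auto
    have adj: "\<forall>i. Suc i < length w \<longrightarrow> w ! i \<noteq> w ! Suc i"
      using Cons.prems(3) by (metis Suc_less_eq length_Cons nth_Cons_Suc)
    have "w = altS y x (length w)"
      using Cons.IH[of y x] Cons.prems adj b Cons by auto
    then show ?thesis using Cons.prems by simp
  qed
qed simp

context coxsys begin

lemma cox_class_cong: "v \<simeq> w \<Longrightarrow> cox_class S m v = cox_class S m w"
  unfolding cox_class_def by (auto intro: ceq_trans ceq_sym)

lemma len_cons_pm:
  assumes w: "w \<in> lists S" and s: "s \<in> S"
  shows "len (s # w) = Suc (len w) \<or> Suc (len (s # w)) = len w"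
proof -
  have r: "rev w \<in> lists S" using w by auto
  have "len (s # w) = len (rev (rev w @ [s]))" by simp
  also have "\<dots> = len (rev w @ [s])" using r s by (intro len_rev) auto
  finally show ?thesis using len_snoc_pm[OF r s] len_rev[OF w] by simp
qed

lemma red_adj:
  assumes w: "w \<in> lists S" "len w = length w" and i: "Suc i < length w"
  shows "w ! i \<noteq> w ! Suc i"
proof
  assume eq: "w ! i = w ! Suc i"
  have "i < length w" using i by simp
  from id_take_nth_drop[OF this] have "w = take i w @ w ! i # drop (Suc i) w" .
  moreover have "drop (Suc i) w = w ! Suc i # drop (Suc (Suc i)) w"
    using i by (simp add: Cons_nth_drop_Suc)
  ultimately have we: "w = take i w @ w ! i # w ! i # drop (Suc (Suc i)) w" using eq by simp
  have "w ! i \<in> S" using w i by auto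
  from ss_del[OF this, of "take i w" "drop (Suc (Suc i)) w"] we
  have "w \<simeq> take i w @ drop (Suc (Suc i)) w" by simp
  then have "len w = len (take i w @ drop (Suc (Suc i)) w)" by (rule len_cong)
  also have "\<dots> \<le> length (take i w @ drop (Suc (Suc i)) w)"
    using w by (intro len_le) (auto dest: in_set_takeD in_set_dropD)
  finally show False using w i by simp
qed

lemma pure_dihedral:
  assumes tu: "t \<noteq> u" "t \<in> S" "u \<in> S" and k: "1 \<le> k"
    and g: "g \<simeq> rev (altS t u k)" "g \<simeq> rev (altS u t k)" "len g = k" and gS: "g \<in> lists S"
  shows "\<forall>v\<in>lists {t, u}. len (g @ v) + len v = k"
proof -
  have YS: "{t, u} \<subseteq> S" using tu by auto
  have gen: "g \<simeq> rev (altS x y k)" if "x \<in> {t, u}" "y \<in> {t, u}" "x \<noteq> y" for x y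
    using that g by auto
  have altsym: "altS x y k \<simeq> altS y x k" if "x \<in> {t, u}" "y \<in> {t, u}" "x \<noteq> y" for x y
  proof -
    have "rev (altS x y k) \<simeq> rev (altS y x k)" using gen[OF that] gen[of y x] that
      by (auto intro: ceq_trans ceq_sym)
    from ceq_rev[OF this] show ?thesis by simp
  qed
  have rw: "w = altS (hd w) y (length w)"
    if "w \<in> lists {t, u}" "len w = length w" "w \<noteq> []" "y \<in> {t, u}" "y \<noteq> hd w" for w y
  proof (rule alt_char)
    show "hd w \<noteq> y" using that by simp
    show "set w \<subseteq> {hd w, y}" using that by (cases w) auto
    have wS: "w \<in> lists S" using that YS by auto
    show "\<forall>i. Suc i < length w \<longrightarrow> w ! i \<noteq> w ! Suc i" using red_adj[OF wS that(2)] by blast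
  qed (use that in auto)
  have oth: "\<exists>y\<in>{t,u}. y \<noteq> x" if "x \<in> {t, u}" for x using that tu by auto
  have bound: "len v \<le> k" if v: "v \<in> lists {t, u}" for v
  proof (rule ccontr)
    assume "\<not> len v \<le> k"
    from ex_red[OF v YS] obtain b where b: "b \<in> lists {t, u}" "b \<simeq> v" "dr b" "length b = len v" by auto
    have bS: "b \<in> lists S" using b YS by auto
    have lb: "len b = length b" using len_dr[OF bS b(3)] by simp
    have "b \<noteq> []" using b \<open>\<not> len v \<le> k\<close> by auto
    then have hb: "hd b \<in> {t, u}" using b by (cases b) auto
    obtain y where y: "y \<in> {t, u}" "y \<noteq> hd b" using oth[OF hb] by auto
    have bb: "b = altS (hd b) y (length b)" using rw[OF b(1) lb \<open>b \<noteq> []\<close> y] .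
    define yy where "yy = take (Suc k) b"
    have "b = yy @ drop (Suc k) b" by (simp add: yy_def)
    then have "dr yy" using b(3) dr_prefix by metis
    have yyS: "yy \<in> lists S" using bS by (auto simp: yy_def dest: in_set_takeD)
    have lyy: "len yy = Suc k" using len_dr[OF yyS \<open>dr yy\<close>] \<open>\<not> len v \<le> k\<close> b by (simp add: yy_def)
    have yyeq: "yy = altS (hd b) y (Suc k)" using bb \<open>\<not> len v \<le> k\<close> b
      by (metis take_altS min_def not_less_eq_eq yy_def)
    obtain k' where k': "k = Suc k'" using k by (cases k) auto
    have "yy = hd b # altS y (hd b) k" using yyeq by simp
    also have "\<dots> \<simeq> hd b # altS (hd b) y k"
      using altsym[OF y(1) hb] y ceq_app_l[of "altS y (hd b) k" "altS (hd b) y k" "[hd b]"] by auto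
    also have "\<dots> = [] @ hd b # hd b # altS y (hd b) k'" using k' by simp
    also have "\<dots> \<simeq> [] @ altS y (hd b) k'" using ss_del hb YS by blast
    finally have "len yy = len (altS y (hd b) k')" using len_cong by simp
    also have "\<dots> \<le> k'" using len_le[of "altS y (hd b) k'"] set_altS[of y "hd b" k'] y hb YS by auto
    finally show False using lyy k' by simp
  qed
  show ?thesis
  proof
    fix v assume v: "v \<in> lists {t, u}"
    have vS: "v \<in> lists S" using v YS by auto
    have lower: "k \<le> len (g @ v) + len v"
    proof -
      have "g \<simeq> (g @ v) @ rev v" using ceq_app_l[OF rev_cancel[OF vS], of g] by (simp add: ceq_sym)
      then have "len g = len ((g @ v) @ rev v)" by (rule len_cong)
      also have "\<dots> \<le> len (g @ v) + len (rev v)" using gS vS by (intro len_app) auto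
      finally show ?thesis using len_rev[OF vS] g by simp
    qed
    from ex_red[OF v YS] obtain b where b: "b \<in> lists {t, u}" "b \<simeq> v" "dr b" "length b = len v" by auto
    have bS: "b \<in> lists S" using b YS by auto
    have lb: "len b = length b" using len_dr[OF bS b(3)] by simp
    have upper: "len (g @ v) + len v \<le> k"
    proof (cases "b = []")
      case True
      then have "v \<simeq> []" using b by (auto intro: ceq_sym)
      then have "len (g @ v) = len (g @ [])" by (intro len_cong ceq_app_l)
      then show ?thesis using True b g by simp
    next
      case False
      then have hb: "hd b \<in> {t, u}" using b by (cases b) auto
      obtain y where y: "y \<in> {t, u}" "y \<noteq> hd b" using oth[OF hb] by auto
      have bb: "b = altS (hd b) y (length b)" using rw[OF b(1) lb False y] .
      have jk: "length b \<le> k" using bound[OF v] b by simp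
      define p where "p = (if even (length b) then hd b else y)"
      define q where "q = (if even (length b) then y else hd b)"
      have "altS (hd b) y k = altS (hd b) y (length b + (k - length b))" using jk by simp
      also have "\<dots> = b @ altS p q (k - length b)" using altS_add bb unfolding p_def q_def by metis
      finally have "rev (altS (hd b) y k) = rev (altS p q (k - length b)) @ rev b" by simp
      have "g @ v \<simeq> rev (altS (hd b) y k) @ b"
        using gen[OF hb y(1) y(2)[symmetric]] b(2) by (intro ceq_app) (auto intro: ceq_sym)
      also have "\<dots> = rev (altS p q (k - length b)) @ (rev b @ b) @ []"
        using \<open>rev (altS (hd b) y k) = _\<close> by simp
      also have "\<dots> \<simeq> rev (altS p q (k - length b)) @ [] @ []"
        using rev_cancel'[OF bS] by (rule ceq_cong)
      finally have "len (g @ v) = len (rev (altS p q (k - length b)))" using len_cong by simp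
      also have "\<dots> \<le> k - length b"
      proof -
        have "p \<in> S" "q \<in> S" using hb y YS unfolding p_def q_def by auto
        then have "rev (altS p q (k - length b)) \<in> lists S" using set_altS[of p q "k - length b"] by auto
        from len_le[OF this] show ?thesis by simp
      qed
      finally show ?thesis using b jk by simp
    qed
    show "len (g @ v) + len v = k" using lower upper by simp
  qed
qed

end


context coxsys begin

lemma desc_form:
  assumes xy: "x \<noteq> y" "x \<in> S" "y \<in> S" and g: "g \<in> lists {x, y}" and d: "len (g @ [x]) < len g"
  shows "g \<simeq> rev (altS x y (len g))"
proof -
  have YS: "{x, y} \<subseteq> S" using xy by auto
  have gS: "g \<in> lists S" using g YS by auto
  have gx: "g @ [x] \<in> lists {x, y}" using g by auto
  have l1: "Suc (len (g @ [x])) = len g" using len_snoc_pm[OF gS xy(2)] d by auto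
  from ex_red[OF gx YS] obtain b where b: "b \<in> lists {x, y}" "b \<simeq> g @ [x]" "length b = len (g @ [x])" by auto
  define c where "c = b @ [x]"
  have "c \<simeq> (g @ [x]) @ [x]" unfolding c_def using b(2) by (rule ceq_app_r)
  also have "(g @ [x]) @ [x] = g @ [x, x] @ []" by simp
  also have "\<dots> \<simeq> g @ [] @ []" using ss[OF xy(2)] by (rule ceq_cong)
  finally have cg: "c \<simeq> g" by simp
  have cS: "c \<in> lists {x, y}" using b by (auto simp: c_def)
  have lc: "length c = len g" using b l1 by (simp add: c_def)
  have rcS: "rev c \<in> lists S" using cS YS by auto
  have "c \<in> lists S" using cS YS by auto
  then have "len (rev c) = length (rev c)"
    using len_rev[of c] len_cong[OF cg] lc by auto
  have "rev c = altS x y (length (rev c))"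
  proof (rule alt_char)
    show "x \<noteq> y" by fact
    show "set (rev c) \<subseteq> {x, y}" using cS by auto
    show "\<forall>i. Suc i < length (rev c) \<longrightarrow> rev c ! i \<noteq> rev c ! Suc i"
      using red_adj[OF rcS \<open>len (rev c) = length (rev c)\<close>] by blast
    show "rev c \<noteq> []" "hd (rev c) = x" by (auto simp: c_def)
  qed
  then have "c = rev (altS x y (len g))" using lc by (metis length_rev rev_rev_ident)
  then show ?thesis using cg by (auto intro: ceq_sym)
qed

lemma dihedral_right:
  assumes rs: "r \<noteq> s" "r \<in> S" "s \<in> S" and g: "g \<in> lists {r, s}"
    and dr: "len (g @ [r]) < len g" and ds: "len (g @ [s]) < len g"
  shows "\<forall>v\<in>lists {r, s}. len (g @ v) + len v = len g"
proof (rule pure_dihedral)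
  show "r \<noteq> s" "r \<in> S" "s \<in> S" by fact+
  show "1 \<le> len g" using dr by simp
  show "g \<simeq> rev (altS r s (len g))" using desc_form[OF rs g dr] .
  have g': "g \<in> lists {s, r}" using g by auto
  show "g \<simeq> rev (altS s r (len g))" using desc_form[OF rs(1)[symmetric] rs(3,2) g' ds] .
  show "g \<in> lists S" using g rs by auto
qed simp

lemma dihedral_left:
  assumes rs: "r \<noteq> s" "r \<in> S" "s \<in> S" and e: "e \<in> lists S"
    and dr: "len (r # e) < len e" and ds: "len (s # e) < len e"
  shows "\<forall>v\<in>lists {r, s}. len (rev v @ e) + len v = len e"
proof
  fix v assume v: "v \<in> lists {r, s}"
  have YS: "{r, s} \<subseteq> S" using rs by auto
  define f where "f = rev e"
  have fS: "f \<in> lists S" using e by (auto simp: f_def)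
  have lf: "len f = len e" using len_rev[OF e] by (simp add: f_def)
  have lfx: "len (f @ [x]) = len (x # e)" if "x \<in> S" for x
  proof -
    have "f @ [x] = rev (x # e)" by (simp add: f_def)
    then show ?thesis using len_rev[of "x # e"] e that by simp
  qed
  from P2[OF YS order.refl fS] obtain u0 g where
    ug: "u0 \<in> lists S" "g \<in> lists {r, s}" "minY {r, s} u0" "f \<simeq> u0 @ g" by blast
  have lfg: "len f = len u0 + len g" using len_cong[OF ug(4)] P1[OF YS ug(3) ug(2)] by simp
  have dsc: "len (g @ [x]) < len g" if x: "x \<in> {r, s}" "len (x # e) < len e" for x
  proof -
    have "len (f @ [x]) = len (u0 @ (g @ [x]))"
      using len_cong[OF ceq_app_r[OF ug(4), of "[x]"]] by simp
    also have "\<dots> = len u0 + len (g @ [x])" using P1[OF YS ug(3)] ug(2) x by auto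
    finally show ?thesis using lfx[of x] x YS lf lfg by auto
  qed
  have pd: "\<forall>v\<in>lists {r, s}. len (g @ v) + len v = len g"
    using dihedral_right[OF rs ug(2) dsc dsc] dr ds by auto
  have "len (f @ v) = len (u0 @ (g @ v))"
    using len_cong[OF ceq_app_r[OF ug(4), of v]] by simp
  also have "\<dots> = len u0 + len (g @ v)" using P1[OF YS ug(3)] ug(2) v by auto
  finally have "len (f @ v) + len v = len f" using pd v lfg by auto
  moreover have "len (rev v @ e) = len (f @ v)"
  proof -
    have "rev v @ e = rev (f @ v)" by (simp add: f_def)
    moreover have "f @ v \<in> lists S" using fS v YS by auto
    ultimately show ?thesis using len_rev[of "f @ v"] by simp
  qed
  ultimately show "len (rev v @ e) + len v = len e" using lf by simp
qed

end


context coxsys begin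

lemma len_single: "t \<in> S \<Longrightarrow> len [t] = 1"
  using len_snoc_pm[of "[]" t] by auto

lemma Fprime:
  assumes ZS: "Z \<subseteq> S" and d: "d \<in> lists S" and desc: "\<forall>s\<in>Z. len (s # d) < len d"
  shows "x \<in> lists Z \<Longrightarrow> len (rev x @ d) + len x = len d"
proof -
  have main: "\<forall>x. x \<in> lists Z \<longrightarrow> len x = n \<longrightarrow> len (rev x @ d) + len x = len d" for n
  proof (induction n rule: less_induct)
    case (less n)
    show ?case
    proof (intro allI impI)
      fix x assume x: "x \<in> lists Z" "len x = n"
      from ex_red[OF x(1) ZS] obtain x0 where
        x0: "x0 \<in> lists Z" "x0 \<simeq> x" "dr x0" "length x0 = len x" by auto
      have x0S: "x0 \<in> lists S" using x0 ZS by auto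
      have tr: "len (rev x @ d) = len (rev x0 @ d)"
        using len_cong[OF ceq_app_r[OF ceq_rev[OF x0(2)]]] by simp
      have lx0: "len x0 = n" using len_dr[OF x0S x0(3)] x0 x by simp
      show "len (rev x @ d) + len x = len d"
      proof (cases x0 rule: rev_exhaust)
        case Nil then show ?thesis using tr x0 x by simp
      next
        case (snoc x' s)
        have sZ: "s \<in> Z" and x'Z: "x' \<in> lists Z" using x0 snoc by auto
        have sS: "s \<in> S" using sZ ZS by auto
        have x'S: "x' \<in> lists S" using x'Z ZS by auto
        have "dr x'" using x0(3) snoc dr_prefix by blast
        have lx': "len x' = length x'" using len_dr[OF x'S \<open>dr x'\<close>] by simp
        have nx: "n = Suc (length x')" using x0 x snoc by simp
        show ?thesis
        proof (cases x' rule: rev_exhaust)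
          case Nil
          have "len (s # d) < len d" using desc sZ by auto
          then have "Suc (len (s # d)) = len d" using len_cons_pm[OF d sS] by auto
          then show ?thesis using tr snoc Nil x nx by simp
        next
          case (snoc x'' r)
          have rZ: "r \<in> Z" using x'Z snoc by auto
          have rS: "r \<in> S" using rZ ZS by auto
          have x0e: "x0 = x'' @ [r, s]" using \<open>x0 = x' @ [s]\<close> snoc by simp
          have "r \<noteq> s"
          proof
            assume "r = s"
            have "len x0 = length x0" using lx0 x0 x by simp
            from red_adj[OF x0S this, of "length x''"] show False using x0e \<open>r = s\<close>
              by (simp add: nth_append)
          qed
          define Y where "Y = {r, s}"
          have YZ: "Y \<subseteq> Z" and YS: "Y \<subseteq> S" using rZ sZ ZS by (auto simp: Y_def)
          from P2[OF YZ ZS x'Z] obtain z w where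
            zw: "z \<in> lists Z" "w \<in> lists Y" "minY Y z" "x' \<simeq> z @ w" by blast
          have zS: "z \<in> lists S" using zw ZS by auto
          have lxzw: "len x' = len z + len w" using len_cong[OF zw(4)] P1[OF YS zw(3) zw(2)] by simp
          have wr: "w @ [r] \<in> lists Y" and ws: "w @ [s] \<in> lists Y" using zw by (auto simp: Y_def)
          have lr: "len (x' @ [r]) = len z + len (w @ [r])"
            using len_cong[OF ceq_app_r[OF zw(4), of "[r]"]] P1[OF YS zw(3) wr] by simp
          have ls: "len (x' @ [s]) = len z + len (w @ [s])"
            using len_cong[OF ceq_app_r[OF zw(4), of "[s]"]] P1[OF YS zw(3) ws] by simp
          have "len (x' @ [r]) \<le> length x''"
          proof -
            have "x' @ [r] = x'' @ [r, r] @ []" using snoc by simp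
            also have "\<dots> \<simeq> x'' @ [] @ []" using ss[OF rS] by (rule ceq_cong)
            finally have "len (x' @ [r]) = len x''" using len_cong by simp
            also have "\<dots> \<le> length x''" using x'Z ZS snoc by (intro len_le) auto
            finally show ?thesis .
          qed
          then have wdr: "len (w @ [r]) < len w" using lr lxzw lx' snoc by simp
          have "len (x' @ [s]) = n" using lx0 \<open>x0 = x' @ [s]\<close> by simp
          then have wds: "len (w @ [s]) = Suc (len w)" using ls lxzw lx' nx by simp
          have nz: "n = len z + len w + 1" using lxzw lx' nx by simp
          have Pz: "len (rev z @ d) + len z = len d"
            using less.IH[of "len z"] zw(1) nz wdr by auto
          define e where "e = rev z @ d"
          have eS: "e \<in> lists S" using zS d by (auto simp: e_def)
          have de: "len (t # e) < len e" if t: "t \<in> Y" for t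
          proof -
            have lzt: "len (z @ [t]) = Suc (len z)"
              using minY_asc[OF YS zw(3) t] len_snoc_pm[OF zS, of t] t YS by auto
            have "z @ [t] \<in> lists Z" using zw t YZ by auto
            moreover have "len (z @ [t]) < n" using lzt nz wdr by simp
            ultimately have "len (rev (z @ [t]) @ d) + len (z @ [t]) = len d"
              using less.IH[of "len (z @ [t])"] by blast
            then show ?thesis using lzt Pz by (simp add: e_def)
          qed
          have dl: "\<forall>v\<in>lists {r, s}. len (rev v @ e) + len v = len e"
            using dihedral_left[OF \<open>r \<noteq> s\<close> rS sS eS] de by (auto simp: Y_def)
          have "w @ [s] \<in> lists {r, s}" using ws by (simp add: Y_def)
          from bspec[OF dl this] have A: "len (rev (w @ [s]) @ e) + Suc (len w) = len e" using wds by simp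
          have "rev x0 @ d = [s] @ rev x' @ d" using \<open>x0 = x' @ [s]\<close> by simp
          also have "\<dots> \<simeq> [s] @ rev (z @ w) @ d" using ceq_rev[OF zw(4)] by (intro ceq_cong)
          also have "\<dots> = rev (w @ [s]) @ e" by (simp add: e_def)
          finally have "len (rev x0 @ d) = len (rev (w @ [s]) @ e)" by (rule len_cong)
          then show ?thesis using A Pz tr x nz by (simp add: e_def)
        qed
      qed
    qed
  qed
  assume "x \<in> lists Z"
  then show ?thesis using main by blast
qed

lemma P5:
  assumes fin: "finite S" and ZS: "Z \<subseteq> S" and c: "c \<in> lists Z"
    and desc: "\<forall>s\<in>Z. len (c @ [s]) < len c"
  shows "finite (special_subgroup S m Z)"
proof -
  have cS: "c \<in> lists S" using c ZS by auto
  define d where "d = rev c"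
  have dS: "d \<in> lists S" using cS by (auto simp: d_def)
  have ld: "len d = len c" using len_rev[OF cS] by (simp add: d_def)
  have "\<forall>s\<in>Z. len (s # d) < len d"
  proof
    fix s assume s: "s \<in> Z"
    have "s # d = rev (c @ [s])" by (simp add: d_def)
    moreover have "c @ [s] \<in> lists S" using cS s ZS by auto
    ultimately have "len (s # d) = len (c @ [s])" using len_rev[of "c @ [s]"] by simp
    then show "len (s # d) < len d" using desc s ld by simp
  qed
  note F = Fprime[OF ZS dS this]
  have "special_subgroup S m Z \<subseteq> cox_class S m ` {w. set w \<subseteq> Z \<and> length w \<le> len d}"
  proof
    fix C assume "C \<in> special_subgroup S m Z"
    then obtain w where w: "w \<in> lists Z" "C = cox_class S m w" unfolding special_subgroup_def by auto
    from ex_red[OF w(1) ZS] obtain w' where w': "w' \<in> lists Z" "w' \<simeq> w" "length w' = len w" by auto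
    have "len w \<le> len d" using F[OF w(1)] by simp
    moreover have "C = cox_class S m w'" using w cox_class_cong[OF w'(2)] by simp
    ultimately show "C \<in> cox_class S m ` {w. set w \<subseteq> Z \<and> length w \<le> len d}"
      using w' by auto
  qed
  moreover have "finite {w. set w \<subseteq> Z \<and> length w \<le> len d}"
    using fin ZS by (intro finite_lists_length_le) (auto intro: finite_subset)
  ultimately show ?thesis by (meson finite_imageI finite_subset)
qed

end


context coxsys begin

lemma class_eq_iff: "u \<in> lists S \<Longrightarrow> cox_class S m u = cox_class S m w \<Longrightarrow> w \<simeq> u"
  unfolding cox_class_def by blast

lemma cl_len:
  assumes XS: "X \<subseteq> S" and w: "w \<in> lists X"
  shows "cox_length S m X (cox_class S m w) = len w"
  unfolding cox_length_def
proof (rule Least_equality)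
  from ex_red[OF w XS] obtain v where v: "v \<in> lists X" "v \<simeq> w" "length v = len w" by auto
  then show "\<exists>u\<in>lists X. cox_class S m u = cox_class S m w \<and> length u = len w"
    using cox_class_cong by blast
  fix n assume "\<exists>u\<in>lists X. cox_class S m u = cox_class S m w \<and> length u = n"
  then obtain u where u: "u \<in> lists X" "cox_class S m u = cox_class S m w" "length u = n" by auto
  have uS: "u \<in> lists S" using u XS by auto
  have "w \<simeq> u" using class_eq_iff[OF uS u(2)] .
  then have "len w = len u" by (rule len_cong)
  also have "\<dots> \<le> length u" using len_le[OF uS] .
  finally show "len w \<le> n" using u by simp
qed

definition lc :: "'a list set \<Rightarrow> nat" where "lc C = cox_length S m S C"

lemma lc_class: "w \<in> lists S \<Longrightarrow> lc (cox_class S m w) = len w"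
  unfolding lc_def using cl_len[OF order.refl] .

lemma cl_len_lc: "X \<subseteq> S \<Longrightarrow> C \<in> special_subgroup S m X \<Longrightarrow> cox_length S m X C = lc C"
proof -
  assume XS: "X \<subseteq> S" and "C \<in> special_subgroup S m X"
  then obtain w where w: "w \<in> lists X" "C = cox_class S m w" unfolding special_subgroup_def by auto
  then have "w \<in> lists S" using XS by auto
  then show ?thesis using cl_len[OF XS w(1)] lc_class w by simp
qed

definition TT :: "'a set \<Rightarrow> nat \<Rightarrow> 'a list set set" where
  "TT Z n = {C \<in> special_subgroup S m Z. lc C = n}"

definition minC :: "'a set \<Rightarrow> 'a list set \<Rightarrow> bool" where
  "minC Y C \<longleftrightarrow> (\<exists>w\<in>lists S. C = cox_class S m w \<and> minY Y w)"

definition BB :: "'a set \<Rightarrow> 'a set \<Rightarrow> nat \<Rightarrow> 'a list set set" where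
  "BB Z Y n = {C \<in> special_subgroup S m Z. minC Y C \<and> lc C = n}"

lemma minC_iff: "w \<in> lists S \<Longrightarrow> minC Y (cox_class S m w) \<longleftrightarrow> minY Y w"
  unfolding minC_def using class_eq_iff minY_cong by (metis ceq_sym)

lemma finite_TT:
  assumes fin: "finite S" and ZS: "Z \<subseteq> S"
  shows "finite (TT Z n)"
proof -
  have "TT Z n \<subseteq> cox_class S m ` {w. set w \<subseteq> Z \<and> length w \<le> n}"
  proof
    fix C assume "C \<in> TT Z n"
    then obtain w where w: "w \<in> lists Z" "C = cox_class S m w" "lc C = n"
      unfolding TT_def special_subgroup_def by auto
    from ex_red[OF w(1) ZS] obtain w' where w': "w' \<in> lists Z" "w' \<simeq> w" "length w' = len w" by auto
    have "w \<in> lists S" using w ZS by auto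
    then have "len w = n" using w lc_class[of w] by simp
    moreover have "C = cox_class S m w'" using w cox_class_cong[OF w'(2)] by simp
    ultimately show "C \<in> cox_class S m ` {w. set w \<subseteq> Z \<and> length w \<le> n}" using w' by auto
  qed
  moreover have "finite {w. set w \<subseteq> Z \<and> length w \<le> n}"
    using fin ZS by (intro finite_lists_length_le) (auto intro: finite_subset)
  ultimately show ?thesis by (meson finite_imageI finite_subset)
qed

definition rep :: "'a list set \<Rightarrow> 'a list" where
  "rep C = (SOME w. w \<in> lists S \<and> cox_class S m w = C)"

lemma rep:
  assumes "w \<in> lists S" "C = cox_class S m w"
  shows "rep C \<in> lists S" "cox_class S m (rep C) = C" "rep C \<simeq> w"
proof -
  have ex: "\<exists>v. v \<in> lists S \<and> cox_class S m v = C" using assms by auto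
  show a: "rep C \<in> lists S" "cox_class S m (rep C) = C" unfolding rep_def using someI_ex[OF ex] by auto
  show "rep C \<simeq> w" using class_eq_iff[OF assms(1)] a assms(2) by (metis ceq_sym)
qed

definition mulC :: "'a list set \<Rightarrow> 'a list set \<Rightarrow> 'a list set" where
  "mulC C1 C2 = cox_class S m (rep C1 @ rep C2)"

lemma mulC: "u \<in> lists S \<Longrightarrow> v \<in> lists S \<Longrightarrow> mulC (cox_class S m u) (cox_class S m v) = cox_class S m (u @ v)"
  unfolding mulC_def using rep(3) by (intro cox_class_cong ceq_app) auto

lemma card_TT_prod:
  assumes fin: "finite S" and YZ: "Y \<subseteq> Z" and ZS: "Z \<subseteq> S"
  shows "card (TT Z n) = (\<Sum>k=0..n. card (BB Z Y k) * card (TT Y (n - k)))"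
proof -
  have YS: "Y \<subseteq> S" using YZ ZS by auto
  have finB: "finite (BB Z Y k)" for k
    by (rule finite_subset[OF _ finite_TT[OF fin ZS, of k]]) (auto simp: BB_def TT_def)
  define f where "f = (\<lambda>(k::nat, C1, C2). mulC C1 C2)"
  have "bij_betw f (SIGMA k:{0..n}. BB Z Y k \<times> TT Y (n - k)) (TT Z n)"
    unfolding bij_betw_def
  proof (intro conjI)
    show "inj_on f (SIGMA k:{0..n}. BB Z Y k \<times> TT Y (n - k))"
    proof (rule inj_onI)
      fix x y assume x: "x \<in> (SIGMA k:{0..n}. BB Z Y k \<times> TT Y (n - k))"
        and y: "y \<in> (SIGMA k:{0..n}. BB Z Y k \<times> TT Y (n - k))" and fxy: "f x = f y"
      obtain k C1 C2 where xe: "x = (k, C1, C2)" by (metis prod_cases3)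
      obtain k' C1' C2' where ye: "y = (k', C1', C2')" by (metis prod_cases3)
      have a: "k \<in> {0..n}" "C1 \<in> BB Z Y k" "C2 \<in> TT Y (n - k)"
        "k' \<in> {0..n}" "C1' \<in> BB Z Y k'" "C2' \<in> TT Y (n - k')"
        "f (k, C1, C2) = f (k', C1', C2')" using x y fxy xe ye by auto
      from a(2) obtain u where u: "u \<in> lists S" "C1 = cox_class S m u" "minY Y u" "lc C1 = k"
        unfolding BB_def minC_def by auto
      from a(5) obtain u' where u': "u' \<in> lists S" "C1' = cox_class S m u'" "minY Y u'" "lc C1' = k'"
        unfolding BB_def minC_def by auto
      from a(3) obtain v where v: "v \<in> lists Y" "C2 = cox_class S m v"
        unfolding TT_def special_subgroup_def by auto
      from a(6) obtain v' where v': "v' \<in> lists Y" "C2' = cox_class S m v'"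
        unfolding TT_def special_subgroup_def by auto
      have vS: "v \<in> lists S" and v'S: "v' \<in> lists S" using v v' YS by auto
      have "cox_class S m (u @ v) = cox_class S m (u' @ v')"
        using a(7) u v u' v' unfolding f_def by (simp add: mulC[OF u(1) vS] mulC[OF u'(1) v'S])
      moreover have "u @ v \<in> lists S" using u(1) vS by auto
      ultimately have "u' @ v' \<simeq> u @ v" using class_eq_iff[of "u @ v" "u' @ v'"] by auto
      from P3[OF YS u'(3) u(3) v'(1) v(1) this] have "u' \<simeq> u" "v' \<simeq> v" by auto
      then have "C1 = C1'" "C2 = C2'" using u u' v v' by (auto simp: cox_class_cong)
      then show "x = y" using u u' xe ye by simp
    qed
    show "f ` (SIGMA k:{0..n}. BB Z Y k \<times> TT Y (n - k)) = TT Z n"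
    proof (rule set_eqI, rule iffI)
      fix C assume "C \<in> f ` (SIGMA k:{0..n}. BB Z Y k \<times> TT Y (n - k))"
      then obtain k C1 C2 where a: "k \<in> {0..n}" "C1 \<in> BB Z Y k" "C2 \<in> TT Y (n - k)" "C = mulC C1 C2"
        unfolding f_def by auto
      from a(2) obtain u where u: "u \<in> lists Z" "C1 = cox_class S m u" "lc C1 = k"
        unfolding BB_def special_subgroup_def by auto
      have uS: "u \<in> lists S" using u ZS by auto
      have mu: "minY Y u" using a(2) u minC_iff[OF uS] unfolding BB_def by auto
      from a(3) obtain v where v: "v \<in> lists Y" "C2 = cox_class S m v" "lc C2 = n - k"
        unfolding TT_def special_subgroup_def by auto
      have vS: "v \<in> lists S" using v YS by auto
      have C: "C = cox_class S m (u @ v)" using a(4) u v mulC[OF uS vS] by simp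
      have "lc C = len (u @ v)" using C lc_class uS vS by simp
      also have "\<dots> = len u + len v" using P1[OF YS mu v(1)] .
      also have "\<dots> = n" using u v lc_class uS vS a(1) by auto
      moreover have "u @ v \<in> lists Z" using u v YZ by auto
      ultimately show "C \<in> TT Z n" unfolding TT_def special_subgroup_def using C by auto
    next
      fix C assume "C \<in> TT Z n"
      then obtain c where c: "c \<in> lists Z" "C = cox_class S m c" "lc C = n"
        unfolding TT_def special_subgroup_def by auto
      from P2[OF YZ ZS c(1)] obtain u v where
        uv: "u \<in> lists Z" "v \<in> lists Y" "minY Y u" "c \<simeq> u @ v" by blast
      have uS: "u \<in> lists S" and vS: "v \<in> lists S" using uv YZ ZS by auto
      have cS: "c \<in> lists S" using c ZS by auto
      have ln: "len u + len v = n"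
        using c lc_class[OF cS] len_cong[OF uv(4)] P1[OF YS uv(3) uv(2)] by simp
      have "cox_class S m u \<in> BB Z Y (len u)"
        unfolding BB_def special_subgroup_def using uv minC_iff[OF uS] lc_class[OF uS] by auto
      moreover have "cox_class S m v \<in> TT Y (n - len u)"
        unfolding TT_def special_subgroup_def using uv lc_class[OF vS] ln by auto
      moreover have "C = f (len u, cox_class S m u, cox_class S m v)"
        unfolding f_def using c cox_class_cong[OF uv(4)] mulC[OF uS vS] by simp
      ultimately show "C \<in> f ` (SIGMA k:{0..n}. BB Z Y k \<times> TT Y (n - k))"
        using ln by force
    qed
  qed
  then have "card (TT Z n) = card (SIGMA k:{0..n}. BB Z Y k \<times> TT Y (n - k))"
    by (simp add: bij_betw_same_card)
  also have "\<dots> = (\<Sum>k=0..n. card (BB Z Y k \<times> TT Y (n - k)))"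
    by (rule card_SigmaI) (auto intro: finB finite_TT[OF fin YS])
  also have "\<dots> = (\<Sum>k=0..n. card (BB Z Y k) * card (TT Y (n - k)))"
    by (simp add: card_cartesian_product)
  finally show ?thesis .
qed

end


lemma alt_pow:
  assumes "finite A" "a \<in> A"
  shows "(\<Sum>Y\<in>Pow A. (-1::rat) ^ card Y) = 0"
proof -
  define A' where "A' = A - {a}"
  have A: "A = insert a A'" "a \<notin> A'" "finite A'" using assms by (auto simp: A'_def)
  have disj: "Pow A' \<inter> insert a ` Pow A' = {}" using A(2) by auto
  have inj: "inj_on (insert a) (Pow A')"
  proof (rule inj_onI)
    fix x y assume xy: "x \<in> Pow A'" "y \<in> Pow A'" "insert a x = insert a y"
    then have "a \<notin> x" "a \<notin> y" using A(2) by auto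
    then show "x = y" using xy(3) insert_ident by metis
  qed
  have "(\<Sum>Y\<in>Pow A. (-1::rat) ^ card Y) =
        (\<Sum>Y\<in>Pow A'. (-1::rat) ^ card Y) + (\<Sum>Y\<in>insert a ` Pow A'. (-1::rat) ^ card Y)"
    unfolding A(1) Pow_insert using A(3) disj by (intro sum.union_disjoint) auto
  also have "(\<Sum>Y\<in>insert a ` Pow A'. (-1::rat) ^ card Y) = (\<Sum>Y\<in>Pow A'. (-1::rat) ^ card (insert a Y))"
    using inj by (simp add: sum.reindex)
  also have "\<dots> = (\<Sum>Y\<in>Pow A'. - ((-1::rat) ^ card Y))"
  proof (rule sum.cong)
    fix Y assume "Y \<in> Pow A'"
    then have "finite Y" "a \<notin> Y" using A finite_subset by auto
    then show "(-1::rat) ^ card (insert a Y) = - ((-1) ^ card Y)" by simp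
  qed simp
  finally show ?thesis by (simp add: sum_negf)
qed

context coxsys begin

lemma alt_count:
  assumes fin: "finite S" and ZS: "Z \<subseteq> S" and inf: "infinite (special_subgroup S m Z)"
  shows "(\<Sum>Y\<in>Pow Z. (-1::rat) ^ card Y * of_nat (card (BB Z Y n))) = 0"
proof -
  have finZ: "finite Z" using fin ZS finite_subset by auto
  have finT: "finite (TT Z n)" using finite_TT[OF fin ZS] .
  have BBf: "BB Z Y n = {C \<in> TT Z n. minC Y C}" for Y unfolding BB_def TT_def by auto
  have "(\<Sum>Y\<in>Pow Z. (-1::rat) ^ card Y * of_nat (card (BB Z Y n))) =
        (\<Sum>Y\<in>Pow Z. (\<Sum>C\<in>TT Z n. (-1::rat) ^ card Y * (if minC Y C then 1 else 0)))"
  proof (rule sum.cong)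
    fix Y
    have "of_nat (card (BB Z Y n)) = (\<Sum>C\<in>{C \<in> TT Z n. minC Y C}. (1::rat))" unfolding BBf by simp
    also have "\<dots> = (\<Sum>C\<in>TT Z n. if minC Y C then 1 else 0)" using finT by (rule sum.inter_filter)
    finally show "(-1::rat) ^ card Y * of_nat (card (BB Z Y n)) =
        (\<Sum>C\<in>TT Z n. (-1::rat) ^ card Y * (if minC Y C then 1 else 0))"
      by (simp add: sum_distrib_left)
  qed simp
  also have "\<dots> = (\<Sum>C\<in>TT Z n. \<Sum>Y\<in>Pow Z. (-1::rat) ^ card Y * (if minC Y C then 1 else 0))"
    by (rule sum.swap)
  also have "\<dots> = (\<Sum>C\<in>TT Z n. 0)"
  proof (rule sum.cong)
    fix C assume "C \<in> TT Z n"
    then obtain c where c: "c \<in> lists Z" "C = cox_class S m c"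
      unfolding TT_def special_subgroup_def by auto
    have cS: "c \<in> lists S" using c ZS by auto
    define A where "A = {s \<in> Z. len c < len (c @ [s])}"
    have AZ: "A \<subseteq> Z" by (auto simp: A_def)
    have mc: "minC Y C \<longleftrightarrow> Y \<subseteq> A" if "Y \<subseteq> Z" for Y
    proof -
      have YS: "Y \<subseteq> S" using that ZS by auto
      have "minC Y C \<longleftrightarrow> minY Y c" using minC_iff[OF cS] c by simp
      also have "\<dots> \<longleftrightarrow> Y \<subseteq> A"
        using P4[OF YS cS] minY_asc[OF YS] that unfolding A_def by auto
      finally show ?thesis .
    qed
    have "A \<noteq> {}"
    proof
      assume "A = {}"
      then have "\<forall>s\<in>Z. len (c @ [s]) < len c"
        using len_snoc_pm[OF cS] ZS unfolding A_def by fastforce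
      from P5[OF fin ZS c(1) this] inf show False by simp
    qed
    then obtain a where a: "a \<in> A" by auto
    have "(\<Sum>Y\<in>Pow Z. (-1::rat) ^ card Y * (if minC Y C then 1 else 0)) =
          (\<Sum>Y\<in>Pow Z. if Y \<subseteq> A then (-1::rat) ^ card Y else 0)"
      by (rule sum.cong) (auto simp: mc)
    also have "\<dots> = (\<Sum>Y\<in>{Y \<in> Pow Z. Y \<subseteq> A}. (-1::rat) ^ card Y)"
      using finZ by (intro sum.inter_filter[symmetric]) simp
    also have "{Y \<in> Pow Z. Y \<subseteq> A} = Pow A" using AZ by auto
    also have "(\<Sum>Y\<in>Pow A. (-1::rat) ^ card Y) = 0"
      using alt_pow[of A a] a AZ finZ finite_subset by blast
    finally show "(\<Sum>Y\<in>Pow Z. (-1::rat) ^ card Y * (if minC Y C then 1 else 0)) = 0" .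
  qed simp
  finally show ?thesis by simp
qed

lemma poincare_TT: "Z \<subseteq> S \<Longrightarrow> poincare_fps S m Z = Abs_fps (\<lambda>n. of_nat (card (TT Z n)))"
  unfolding poincare_fps_def TT_def using cl_len_lc by (metis (no_types, lifting) Collect_cong)

definition Bf :: "'a set \<Rightarrow> 'a set \<Rightarrow> rat fps" where
  "Bf Z Y = Abs_fps (\<lambda>n. of_nat (card (BB Z Y n)))"

lemma prod_fps:
  assumes "finite S" "Y \<subseteq> Z" "Z \<subseteq> S"
  shows "poincare_fps S m Z = Bf Z Y * poincare_fps S m Y"
proof -
  have YS: "Y \<subseteq> S" using assms by auto
  show ?thesis
    unfolding poincare_TT[OF assms(3)] poincare_TT[OF YS] Bf_def
    by (rule fps_ext) (simp add: fps_mult_nth card_TT_prod[OF assms])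
qed

lemma fps0:
  assumes YS: "Y \<subseteq> S"
  shows "poincare_fps S m Y $ 0 = 1"
proof -
  have "TT Y 0 = {cox_class S m []}"
  proof (rule set_eqI, rule iffI)
    fix C assume "C \<in> TT Y 0"
    then obtain w where w: "w \<in> lists Y" "C = cox_class S m w" "lc C = 0"
      unfolding TT_def special_subgroup_def by auto
    have wS: "w \<in> lists S" using w YS by auto
    then have "w \<simeq> []" using w lc_class by (intro len0) auto
    then show "C \<in> {cox_class S m []}" using w cox_class_cong by auto
  next
    fix C assume "C \<in> {cox_class S m []}"
    then show "C \<in> TT Y 0" unfolding TT_def special_subgroup_def using lc_class[of "[]"] by auto
  qed
  then show ?thesis unfolding poincare_TT[OF YS] by simp
qed

lemma alt_fps:
  assumes fin: "finite S" and ZS: "Z \<subseteq> S" and inf: "infinite (special_subgroup S m Z)"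
  shows "(\<Sum>Y\<in>Pow Z. fps_const ((-1::rat) ^ card Y) * inverse (poincare_fps S m Y)) = 0"
proof -
  let ?F = "poincare_fps S m"
  have s0: "(\<Sum>Y\<in>Pow Z. fps_const ((-1::rat) ^ card Y) * Bf Z Y) = 0"
    by (rule fps_ext) (simp add: fps_sum_nth Bf_def alt_count[OF assms])
  have B: "Bf Z Y = ?F Z * inverse (?F Y)" if "Y \<in> Pow Z" for Y
  proof -
    have YS: "Y \<subseteq> S" using that ZS by auto
    have "?F Z * inverse (?F Y) = Bf Z Y * (?F Y * inverse (?F Y))"
      using prod_fps[OF fin _ ZS, of Y] that by (simp add: mult.assoc)
    also have "?F Y * inverse (?F Y) = 1" using fps0[OF YS] by (intro inverse_mult_eq_1') simp
    finally show ?thesis by simp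
  qed
  have "?F Z * (\<Sum>Y\<in>Pow Z. fps_const ((-1::rat) ^ card Y) * inverse (?F Y)) =
        (\<Sum>Y\<in>Pow Z. fps_const ((-1::rat) ^ card Y) * Bf Z Y)"
    by (simp add: sum_distrib_left B mult.left_commute)
  also have "\<dots> = 0" by (rule s0)
  finally have "?F Z * (\<Sum>Y\<in>Pow Z. fps_const ((-1::rat) ^ card Y) * inverse (?F Y)) = 0" .
  moreover have "?F Z \<noteq> 0" using fps0[OF ZS] by (metis fps_zero_nth one_neq_zero)
  ultimately show ?thesis by simp
qed

lemma finite_poly:
  assumes ZS: "Z \<subseteq> S" and fW: "finite (special_subgroup S m Z)"
  shows "poincare_fps S m Z = fps_of_poly (poincare_poly S m Z)"
proof (rule fps_ext)
  fix n
  have "fps_of_poly (poincare_poly S m Z) $ n =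
        (\<Sum>c\<in>special_subgroup S m Z. if cox_length S m Z c = n then 1 else 0)"
    unfolding poincare_poly_def by (simp add: coeff_sum coeff_monom eq_commute)
  also have "\<dots> = (\<Sum>c\<in>{c \<in> special_subgroup S m Z. cox_length S m Z c = n}. (1::rat))"
    by (rule sum.inter_filter[OF fW, symmetric])
  also have "\<dots> = poincare_fps S m Z $ n" unfolding poincare_fps_def by simp
  finally show "poincare_fps S m Z $ n = fps_of_poly (poincare_poly S m Z) $ n" by simp
qed

end


context coxsys begin

lemma key:
  assumes fin: "finite S"
  shows "Z \<subseteq> S \<Longrightarrow> (\<forall>Y. Y \<subseteq> Z \<longrightarrow> finite (special_subgroup S m Y) \<longrightarrow> poincare_poly S m Y dvd L) \<Longrightarrow>
    \<exists>Q. fps_of_poly L = fps_of_poly Q * poincare_fps S m Z"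
proof (induction "card Z" arbitrary: Z rule: less_induct)
  case less
  let ?F = "poincare_fps S m"
  have ZS: "Z \<subseteq> S" using less.prems by simp
  have finZ: "finite Z" using fin ZS finite_subset by auto
  show ?case
  proof (cases "finite (special_subgroup S m Z)")
    case True
    then have "poincare_poly S m Z dvd L" using less.prems by auto
    then obtain Q where "L = poincare_poly S m Z * Q" by (rule dvdE)
    then show ?thesis using finite_poly[OF ZS True]
      by (intro exI[of _ Q]) (simp add: fps_of_poly_mult mult.commute)
  next
    case False
    have IH: "\<exists>Q. fps_of_poly L = fps_of_poly Q * ?F Y" if Y: "Y \<subset> Z" for Y
    proof (rule less.hyps)
      show "card Y < card Z" using psubset_card_mono[OF finZ Y] .
      show "Y \<subseteq> S" using Y ZS by auto
      show "\<forall>X. X \<subseteq> Y \<longrightarrow> finite (special_subgroup S m X) \<longrightarrow> poincare_poly S m X dvd L"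
        using less.prems Y by auto
    qed
    define QQ where "QQ Y = (SOME Q. fps_of_poly L = fps_of_poly Q * ?F Y)" for Y
    have QQ: "fps_of_poly L = fps_of_poly (QQ Y) * ?F Y" if "Y \<subset> Z" for Y
      unfolding QQ_def using someI_ex[OF IH[OF that]] .
    have inv: "fps_of_poly L * inverse (?F Y) = fps_of_poly (QQ Y)" if Y: "Y \<subset> Z" for Y
    proof -
      have YS: "Y \<subseteq> S" using Y ZS by auto
      have "fps_of_poly L * inverse (?F Y) = fps_of_poly (QQ Y) * (?F Y * inverse (?F Y))"
        using QQ[OF Y] by (simp add: mult.assoc)
      also have "?F Y * inverse (?F Y) = 1" using fps0[OF YS] by (intro inverse_mult_eq_1') simp
      finally show ?thesis by simp
    qed
    let ?c = "\<lambda>Y. fps_const ((-1::rat) ^ card Y)"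
    have A: "(\<Sum>Y\<in>Pow Z. ?c Y * inverse (?F Y)) = 0" using alt_fps[OF fin ZS False] .
    have "(\<Sum>Y\<in>Pow Z. ?c Y * inverse (?F Y)) = ?c Z * inverse (?F Z) + (\<Sum>Y\<in>Pow Z - {Z}. ?c Y * inverse (?F Y))"
      using finZ by (intro sum.remove) auto
    with A have B: "?c Z * inverse (?F Z) = - (\<Sum>Y\<in>Pow Z - {Z}. ?c Y * inverse (?F Y))"
      by (simp add: eq_neg_iff_add_eq_0)
    define R where "R = - (\<Sum>Y\<in>Pow Z - {Z}. smult ((-1::rat) ^ card Y) (QQ Y))"
    have "fps_of_poly L * (?c Z * inverse (?F Z)) = - (\<Sum>Y\<in>Pow Z - {Z}. ?c Y * (fps_of_poly L * inverse (?F Y)))"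
      unfolding B by (simp add: sum_distrib_left mult.left_commute)
    also have "\<dots> = - (\<Sum>Y\<in>Pow Z - {Z}. ?c Y * fps_of_poly (QQ Y))"
    proof (intro arg_cong[of _ _ uminus] sum.cong refl)
      fix Y assume "Y \<in> Pow Z - {Z}"
      then have "Y \<subset> Z" by auto
      then show "?c Y * (fps_of_poly L * inverse (?F Y)) = ?c Y * fps_of_poly (QQ Y)" using inv by simp
    qed simp
    also have "\<dots> = fps_of_poly R"
      unfolding R_def by (simp add: fps_of_poly_uminus fps_of_poly_sum fps_of_poly_smult)
    finally have C: "fps_of_poly L * (?c Z * inverse (?F Z)) = fps_of_poly R" .
    have cc: "?c Z * ?c Z = 1" by (simp flip: power_mult_distrib)
    define Q where "Q = smult ((-1::rat) ^ card Z) R"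
    have "fps_of_poly L * inverse (?F Z) = ?c Z * (fps_of_poly L * (?c Z * inverse (?F Z)))"
      using cc by (simp add: mult.assoc mult.left_commute)
    also have "\<dots> = fps_of_poly Q" using C by (simp add: Q_def fps_of_poly_smult)
    finally have D: "fps_of_poly L * inverse (?F Z) = fps_of_poly Q" .
    have "fps_of_poly L = fps_of_poly L * (inverse (?F Z) * ?F Z)"
      using fps0[OF ZS] by (simp add: inverse_mult_eq_1)
    also have "\<dots> = fps_of_poly Q * ?F Z" using D by (simp add: mult.assoc)
    finally show ?thesis by blast
  qed
qed

end

theorem mainTheorem4:
  fixes D :: "'a set" and m :: "'a \<Rightarrow> 'a \<Rightarrow> enat"
  assumes "finite D" and "is_coxeter_matrix D m"
    and "infinite (special_subgroup D m D)"
  shows "\<exists>Q :: rat poly. fps_of_poly (virg D m) = fps_of_poly Q * poincare_fps D m D"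
proof -
  interpret coxsys D m using assms(2) by unfold_locales
  have "\<forall>Y. Y \<subseteq> D \<longrightarrow> finite (special_subgroup D m Y) \<longrightarrow> poincare_poly D m Y dvd virg D m"
  proof (intro allI impI)
    fix Y assume Y: "Y \<subseteq> D" "finite (special_subgroup D m Y)"
    then have "Y \<noteq> D" using assms(3) by auto
    then have "Y \<subset> D" using Y by auto
    then have "poincare_poly D m Y \<in> {poincare_poly D m X | X. X \<subset> D \<and> finite (special_subgroup D m X)}"
      using Y by auto
    then show "poincare_poly D m Y dvd virg D m" unfolding virg_def by (rule dvd_Lcm)
  qed
  from key[OF assms(1) order.refl this] show ?thesis .
qed


end
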